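(* Let $\Gamma_1,\Gamma_2,\Gamma_3$ be constants with $\Gamma_1+\Gamma_2+\Gamma_3=0$. Let $\vec\alpha_0,\vec\alpha_1,\vec\alpha_2,\vec\alpha_3\in\mathbb{R}^3$ be arbitrary vectors, and put $$\vec e_i=\tfrac12\left(\vec\alpha_0+\vec\alpha_i-\vec\alpha_j-\vec\alpha_k\right)\quad(\{i,j,k\}=\{1,2,3\}),\qquad \vec\delta=\tfrac14\sum_{\ell=0}^{3}\vec\alpha_\ell .$$ Let $\lambda_0,\dots,\lambda_3$ be pairwise distinct constants with $\sum_{i=1}^3\Gamma_i\lambda_i\neq0$ and $$\lambda_0=\sum_{i=1}^3\lambda_i-\frac{\sum_{i=1}^3\Gamma_i\lambda_i^2}{\sum_{i=1}^3\Gamma_i\lambda_i},$$ and let $a_{l,m}$ (skew-symmetric: $a_{m,l}=-a_{l,m}$) and $b_{l,m}$ (symmetric) for $l\ne m$ in $\{0,1,2,3\}$ be constants with $a_{l,m}b_{l,m}=\lambda_l-\lambda_m$. Suppose $\sigma,\rho,\tau:\mathbb{R}^3\to\mathbb{C}$ satisfy, for all $\vec x\in\mathbb{R}^3$ and all $l\neq m$ in $\{0,1,2,3\}$, $$a_{l,m}\,\tau(\vec x)\,\sigma(\vec x+\vec\alpha_l+\vec\alpha_m)=\sigma(\vec x+\vec\alpha_l)\tau(\vec x+\vec\alpha_m)-\tau(\vec x+\vec\alpha_l)\sigma(\vec x+\vec\alpha_m),$$ $$a_{l,m}\,\rho(\vec x)\,\tau(\vec x+\vec\alpha_l+\vec\alpha_m)=\tau(\vec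 x+\vec\alpha_l)\rho(\vec x+\vec\alpha_m)-\rho(\vec x+\vec\alpha_l)\tau(\vec x+\vec\alpha_m),$$ $$b_{l,m}\,\tau(\vec x+\vec\alpha_l)\tau(\vec x+\vec\alpha_m)=\tau(\vec x)\tau(\vec x+\vec\alpha_l+\vec\alpha_m)+\rho(\vec x)\sigma(\vec x+\vec\alpha_l+\vec\alpha_m).$$ For $n=(n_1,n_2,n_3)\in\mathbb{Z}^3$ let $\vec x(n)=\sum_{i}n_i\vec e_i$ and define $$u(n)=\begin{cases}\rho(\vec x(n)-\vec\delta)/\tau(\vec x(n)-\vec\delta), & n_1+n_2+n_3\ \text{even},\\ \sigma(\vec x(n)+\vec\delta)/\tau(\vec x(n)+\vec\delta), & n_1+n_2+n_3\ \text{odd}.\end{cases}$$ Then $u$ satisfies $$\sum_{i=1}^3\Gamma_i\left[\frac{u(n+e_i)}{1+u(n)u(n+e_i)}+\frac{u(n-e_i)}{1+u(n)u(n-e_i)}\right]=0$$ for every $n\in\mathbb{Z}^3$ at which all quantities involved are defined (all denominators nonzero), where $e_i$ denotes the $i$-th standard unit vector of $\mathbb{Z}^3$.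
   Context: This equation is the Euler–Lagrange ("variational") equation $\partial\mathcal S/\partial u(n)=0$ of the lattice action $\mathcal S=\sum_{n\in\mathbb{Z}^3}\sum_{i=1}^3\Gamma_i\ln[1+u(n)u(n+e_i)]$. The parity classes $n_1+n_2+n_3$ even/odd are the two sublattices of the bipartite cubic lattice. *)

theory Defs
  imports "HOL-Analysis.Analysis"
begin

type_synonym lat = "int \<times> int \<times> int"

definition unitv :: "nat \<Rightarrow> lat" where
  "unitv i = (if i = 1 then (1,0,0) else if i = 2 then (0,1,0) else (0,0,1))"

definition addl :: "lat \<Rightarrow> lat \<Rightarrow> lat" where
  "addl p q = (fst p + fst q, fst (snd p) + fst (snd q), snd (snd p) + snd (snd q))"

definition subl :: "lat \<Rightarrow> lat \<Rightarrow> lat" where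
  "subl p q = (fst p - fst q, fst (snd p) - fst (snd q), snd (snd p) - snd (snd q))"

definition evec :: "(nat \<Rightarrow> real^3) \<Rightarrow> nat \<Rightarrow> real^3" where
  "evec \<alpha> i = (1/2) *\<^sub>R (\<alpha> 0 + \<alpha> i - (\<Sum>j\<in>{1,2,3} - {i}. \<alpha> j))"

definition delta :: "(nat \<Rightarrow> real^3) \<Rightarrow> real^3" where
  "delta \<alpha> = (1/4) *\<^sub>R (\<Sum>l\<in>{0..3}. \<alpha> l)"

definition xpos :: "(nat \<Rightarrow> real^3) \<Rightarrow> lat \<Rightarrow> real^3" where
  "xpos \<alpha> n = of_int (fst n) *\<^sub>R evec \<alpha> 1 + of_int (fst (snd n)) *\<^sub>R evec \<alpha> 2
               + of_int (snd (snd n)) *\<^sub>R evec \<alpha> 3"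

definition parity_even :: "lat \<Rightarrow> bool" where
  "parity_even n = even (fst n + fst (snd n) + snd (snd n))"

definition upt_pt :: "(nat \<Rightarrow> real^3) \<Rightarrow> lat \<Rightarrow> real^3" where
  "upt_pt \<alpha> n = (if parity_even n then xpos \<alpha> n - delta \<alpha> else xpos \<alpha> n + delta \<alpha>)"

definition ufun :: "(real^3 \<Rightarrow> complex) \<Rightarrow> (real^3 \<Rightarrow> complex) \<Rightarrow> (real^3 \<Rightarrow> complex)
    \<Rightarrow> (nat \<Rightarrow> real^3) \<Rightarrow> lat \<Rightarrow> complex" where
  "ufun \<sigma> \<rho> \<tau> \<alpha> n =
     (if parity_even n then \<rho> (xpos \<alpha> n - delta \<alpha>) / \<tau> (xpos \<alpha> n - delta \<alpha>)
      else \<sigma> (xpos \<alpha> n + delta \<alpha>) / \<tau> (xpos \<alpha> n + delta \<alpha>))"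

end

theory Submission
  imports Defs
begin
lemma termA:
  fixes a b c tY tW r s sL tL sM tM :: complex
  assumes "a * b = c" "c\<noteq>0" "tY\<noteq>0" "tW\<noteq>0" "1 + (r/tY) * (s/tW) \<noteq> 0"
    "a * tY * s = sL * tM - tL * sM" "b * tL * tM = tY * tW + r * s"
  shows "(s/tW)/(1+(r/tY) * (s/tW)) = (sL/tL - sM/tM)/c"
proof -
  have e: "1+(r/tY) * (s/tW) = (tY * tW + r * s)/(tY * tW)" using assms(3,4) by (simp add: field_simps)
  have nz: "tY * tW + r * s \<noteq> 0" using assms(5) e by auto
  hence nz2: "b \<noteq> 0" "tL \<noteq> 0" "tM \<noteq> 0" using assms(7) by auto
  have a0: "a \<noteq> 0" using assms(1,2) by auto
  have "(s/tW)/(1+(r/tY) * (s/tW)) = s * tY/(b * tL * tM)" unfolding e assms(7)[symmetric]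
    using assms(3,4) nz assms(7) by (simp add: field_simps)
  also have "\<dots> = a * tY * s/(a * b * tL * tM)" using a0 by (simp add: field_simps)
  also have "\<dots> = (sL/tL - sM/tM)/c" unfolding assms(6) assms(1)
    using nz2 assms(2) by (simp add: field_simps)
  finally show ?thesis .
qed
lemma ev1: "evec \<alpha> 1 = (1/2) *\<^sub>R (\<alpha> 0 + \<alpha> 1 - \<alpha> 2 - \<alpha> 3)"
  by (simp add: evec_def insert_Diff_if)
lemma ev2: "evec \<alpha> 2 = (1/2) *\<^sub>R (\<alpha> 0 + \<alpha> 2 - \<alpha> 1 - \<alpha> 3)"
  by (simp add: evec_def insert_Diff_if algebra_simps)
lemma ev3: "evec \<alpha> 3 = (1/2) *\<^sub>R (\<alpha> 0 + \<alpha> 3 - \<alpha> 1 - \<alpha> 2)"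
  by (simp add: evec_def insert_Diff_if algebra_simps)
lemma dl: "delta \<alpha> = (1/4) *\<^sub>R (\<alpha> 0 + \<alpha> 1 + \<alpha> 2 + \<alpha> 3)"
  by (simp add: delta_def numeral_3_eq_3 numeral_2_eq_2 atLeast0_atMost_Suc algebra_simps)
lemma xp_add: "i \<in> {1,2,3} \<Longrightarrow> xpos \<alpha> (addl n (unitv i)) = xpos \<alpha> n + evec \<alpha> i"
  by (auto simp: xpos_def addl_def unitv_def algebra_simps)
lemma xp_sub: "i \<in> {1,2,3} \<Longrightarrow> xpos \<alpha> (subl n (unitv i)) = xpos \<alpha> n - evec \<alpha> i"
  by (auto simp: xpos_def subl_def unitv_def algebra_simps)
lemma par_add: "i \<in> {1,2,3} \<Longrightarrow> parity_even (addl n (unitv i)) = (\<not> parity_even n)"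
  by (auto simp: parity_even_def addl_def unitv_def)
lemma par_sub: "i \<in> {1,2,3} \<Longrightarrow> parity_even (subl n (unitv i)) = (\<not> parity_even n)"
  by (auto simp: parity_even_def subl_def unitv_def)
lemma core:
  fixes x y z G2 G3 S0 S1 S2 S3 :: complex
  assumes "x \<noteq> 0" "y \<noteq> 0" "z \<noteq> 0" "z = x + y"
  shows "(S0-S1)*(- (- G2*x - G3*z)/(x*z)) + (S0-S2)*((- G2*x - G3*z)/(x*y))
     + (S0-S3)*(- (- G2*x - G3*z)/(z*y))
       + (-G2-G3)*(S2-S3)/y + G2*(S1-S3)/z + G3*(S1-S2)/x = 0"
proof -
  have "(S0-S1)*(- (- G2*x - G3*z)/(x*z)) + (S0-S2)*((- G2*x - G3*z)/(x*y))
     + (S0-S3)*(- (- G2*x - G3*z)/(z*y))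
       + (-G2-G3)*(S2-S3)/y + G2*(S1-S3)/z + G3*(S1-S2)/x
   = ((S0-S1)*(G2*x + G3*z)*y - (S0-S2)*(G2*x + G3*z)*z + (S0-S3)*(G2*x + G3*z)*x
      + (-G2-G3)*(S2-S3)*x*z + G2*(S1-S3)*x*y + G3*(S1-S2)*y*z)/(x*y*z)"
    using assms(1-3) by (simp add: field_simps)
  also have "\<dots> = 0" unfolding assms(4) by (simp add: algebra_simps)
  finally show ?thesis .
qed
lemma alg:
  fixes G1 G2 G3 L0 L1 L2 L3 S0 S1 S2 S3 :: complex
  assumes hG: "G1 + G2 + G3 = 0"
    and d01: "L0 \<noteq> L1" and d02: "L0 \<noteq> L2" and d03: "L0 \<noteq> L3"
    and d12: "L1 \<noteq> L2" and d13: "L1 \<noteq> L3" and d23: "L2 \<noteq> L3"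
    and hD: "G1*L1 + G2*L2 + G3*L3 \<noteq> 0"
    and hl0: "L0 = L1 + L2 + L3 - (G1*L1^2 + G2*L2^2 + G3*L3^2) / (G1*L1 + G2*L2 + G3*L3)"
  shows "G1 * ((S0-S1)/(L0-L1) + (S2-S3)/(L2-L3)) + G2*((S0-S2)/(L0-L2) + (S3-S1)/(L3-L1))
       + G3 * ((S0-S3)/(L0-L3)+(S1-S2)/(L1-L2)) = 0"
proof -
  define D where "D = G1*L1 + G2*L2 + G3*L3"
  have G1e: "G1 = - G2 - G3" using hG by (simp add: algebra_simps eq_neg_iff_add_eq_0)
  have e0: "L0 * D = (L1 + L2 + L3) * D - (G1*L1^2 + G2*L2^2 + G3*L3^2)"
    using hl0 hD unfolding D_def by (simp add: field_simps)
  have k1: "(L0 - L1) * D = - G1*(L1-L2)*(L1-L3)"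
    using e0 unfolding G1e D_def by (simp add: algebra_simps power2_eq_square)
  have k2: "(L0 - L2) * D = - G2*(L2-L1)*(L2-L3)"
    using e0 unfolding G1e D_def by (simp add: algebra_simps power2_eq_square)
  have k3: "(L0 - L3) * D = - G3*(L3-L1)*(L3-L2)"
    using e0 unfolding G1e D_def by (simp add: algebra_simps power2_eq_square)
  have Deq: "D = - G2*(L1-L2) - G3*(L1-L3)" unfolding D_def G1e by (simp add: algebra_simps)
  have q1: "G1/(L0-L1) = (- D)/((L1-L2)*(L1-L3))"
  proof -
    have nz: "(L1-L2)*(L1-L3) \<noteq> 0" "L0 - L1 \<noteq> 0" using d01 d12 d13 by auto
    have "G1 * ((L1-L2)*(L1-L3)) = (- D) * (L0-L1)" using k1 by (simp add: algebra_simps)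
    then show ?thesis using nz by (subst frac_eq_eq) (auto simp: algebra_simps)
  qed
  have q2: "G2/(L0-L2) = D/((L1-L2)*(L2-L3))"
  proof -
    have nz: "(L1-L2)*(L2-L3) \<noteq> 0" "L0 - L2 \<noteq> 0" using d02 d12 d23 by auto
    have "G2 * ((L1-L2)*(L2-L3)) = D * (L0-L2)" using k2 by (simp add: algebra_simps)
    then show ?thesis using nz by (subst frac_eq_eq) (auto simp: algebra_simps)
  qed
  have q3: "G3/(L0-L3) = (- D)/((L1-L3)*(L2-L3))"
  proof -
    have nz: "(L1-L3)*(L2-L3) \<noteq> 0" "L0 - L3 \<noteq> 0" using d03 d13 d23 by auto
    have "G3 * ((L1-L3)*(L2-L3)) = (- D) * (L0-L3)" using k3 by (simp add: algebra_simps)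
    then show ?thesis using nz by (subst frac_eq_eq) (auto simp: algebra_simps)
  qed
  have sw: "G2*(S3-S1)/(L3-L1) = G2*(S1-S3)/(L1-L3)"
    using d13 by (simp add: field_simps)
  have "G1 * ((S0-S1)/(L0-L1) + (S2-S3)/(L2-L3)) + G2*((S0-S2)/(L0-L2) + (S3-S1)/(L3-L1))
       + G3 * ((S0-S3)/(L0-L3)+(S1-S2)/(L1-L2))
     = (S0-S1)*(G1/(L0-L1)) + (S0-S2)*(G2/(L0-L2)) + (S0-S3)*(G3/(L0-L3))
       + G1*(S2-S3)/(L2-L3) + G2*(S3-S1)/(L3-L1) + G3*(S1-S2)/(L1-L2)"
    by (simp add: field_simps)
  also have "\<dots> = (S0-S1)*(- (- G2*(L1-L2) - G3*(L1-L3))/((L1-L2)*(L1-L3)))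
     + (S0-S2)*((- G2*(L1-L2) - G3*(L1-L3))/((L1-L2)*(L2-L3)))
     + (S0-S3)*(- (- G2*(L1-L2) - G3*(L1-L3))/((L1-L3)*(L2-L3)))
       + (-G2-G3)*(S2-S3)/(L2-L3) + G2*(S1-S3)/(L1-L3) + G3*(S1-S2)/(L1-L2)"
    unfolding q1 q2 q3 sw unfolding Deq G1e ..
  also have "\<dots> = 0"
    by (rule core) (use d12 d13 d23 in auto)
  finally show ?thesis .
qed
lemma termB:
  fixes a b c tP tZ r s rL tL rM tM :: complex
  assumes "a * b = c" "c\<noteq>0" "tP\<noteq>0" "tZ\<noteq>0" "1 + (s/tZ) * (r/tP) \<noteq> 0"
    "a * r * tZ = tL * rM - rL * tM" "b * tL * tM = tP * tZ + r * s"
  shows "(r/tP)/(1+(s/tZ) * (r/tP)) = (rM/tM - rL/tL)/c"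
proof -
  have e: "1+(s/tZ) * (r/tP) = (tP * tZ + r * s)/(tP * tZ)" using assms(3,4) by (simp add: field_simps)
  have nz: "tP * tZ + r * s \<noteq> 0" using assms(5) e by auto
  hence nz2: "b \<noteq> 0" "tL \<noteq> 0" "tM \<noteq> 0" using assms(7) by auto
  have a0: "a \<noteq> 0" using assms(1,2) by auto
  have "(r/tP)/(1+(s/tZ) * (r/tP)) = r * tZ/(b * tL * tM)" unfolding e assms(7)[symmetric]
    using assms(3,4) nz assms(7) by (simp add: field_simps)
  also have "\<dots> = a * r * tZ/(a * b * tL * tM)" using a0 by (simp add: field_simps)
  also have "\<dots> = (rM/tM - rL/tL)/c" unfolding assms(6) assms(1)
    using nz2 assms(2) by (simp add: field_simps)
  finally show ?thesis .
qed
lemma ufun_upt: "ufun \<sigma> \<rho> \<tau> \<alpha> n = (if parity_even n then \<rho> (upt_pt \<alpha> n)/\<tau> (upt_pt \<alpha> n)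
   else \<sigma> (upt_pt \<alpha> n)/\<tau> (upt_pt \<alpha> n))"
  by (simp add: ufun_def upt_pt_def)
theorem proposition3p1:
  fixes \<Gamma> :: "nat \<Rightarrow> complex" and \<alpha> :: "nat \<Rightarrow> real^3"
    and lam :: "nat \<Rightarrow> complex" and a b :: "nat \<Rightarrow> nat \<Rightarrow> complex"
    and \<sigma> \<rho> \<tau> :: "real^3 \<Rightarrow> complex" and n :: lat
  assumes hG: "\<Gamma> 1 + \<Gamma> 2 + \<Gamma> 3 = 0"
    and hdist: "\<And>l m. l < 4 \<Longrightarrow> m < 4 \<Longrightarrow> l \<noteq> m \<Longrightarrow> lam l \<noteq> lam m"
    and hGl: "(\<Sum>i\<in>{1,2,3}. \<Gamma> i * lam i) \<noteq> 0"
    and hl0: "lam 0 = (\<Sum>i\<in>{1,2,3}. lam i)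
                - (\<Sum>i\<in>{1,2,3}. \<Gamma> i * (lam i)\<^sup>2) / (\<Sum>i\<in>{1,2,3}. \<Gamma> i * lam i)"
    and hskew: "\<And>l m. l < 4 \<Longrightarrow> m < 4 \<Longrightarrow> l \<noteq> m \<Longrightarrow> a m l = - a l m"
    and hsym: "\<And>l m. l < 4 \<Longrightarrow> m < 4 \<Longrightarrow> l \<noteq> m \<Longrightarrow> b m l = b l m"
    and hab: "\<And>l m. l < 4 \<Longrightarrow> m < 4 \<Longrightarrow> l \<noteq> m \<Longrightarrow> a l m * b l m = lam l - lam m"
    and h1: "\<And>x l m. l < 4 \<Longrightarrow> m < 4 \<Longrightarrow> l \<noteq> m \<Longrightarrow>
        a l m * \<tau> x * \<sigma> (x + \<alpha> l + \<alpha> m)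
          = \<sigma> (x + \<alpha> l) * \<tau> (x + \<alpha> m) - \<tau> (x + \<alpha> l) * \<sigma> (x + \<alpha> m)"
    and h2: "\<And>x l m. l < 4 \<Longrightarrow> m < 4 \<Longrightarrow> l \<noteq> m \<Longrightarrow>
        a l m * \<rho> x * \<tau> (x + \<alpha> l + \<alpha> m)
          = \<tau> (x + \<alpha> l) * \<rho> (x + \<alpha> m) - \<rho> (x + \<alpha> l) * \<tau> (x + \<alpha> m)"
    and h3: "\<And>x l m. l < 4 \<Longrightarrow> m < 4 \<Longrightarrow> l \<noteq> m \<Longrightarrow>
        b l m * \<tau> (x + \<alpha> l) * \<tau> (x + \<alpha> m)
          = \<tau> x * \<tau> (x + \<alpha> l + \<alpha> m) + \<rho> x * \<sigma> (x + \<alpha> l + \<alpha> m)"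
    and hden0: "\<tau> (upt_pt \<alpha> n) \<noteq> 0"
    and hdenp: "\<And>i. i \<in> {1,2,3} \<Longrightarrow> \<tau> (upt_pt \<alpha> (addl n (unitv i))) \<noteq> 0"
    and hdenm: "\<And>i. i \<in> {1,2,3} \<Longrightarrow> \<tau> (upt_pt \<alpha> (subl n (unitv i))) \<noteq> 0"
    and hdenp': "\<And>i. i \<in> {1,2,3} \<Longrightarrow>
        1 + ufun \<sigma> \<rho> \<tau> \<alpha> n * ufun \<sigma> \<rho> \<tau> \<alpha> (addl n (unitv i)) \<noteq> 0"
    and hdenm': "\<And>i. i \<in> {1,2,3} \<Longrightarrow>
        1 + ufun \<sigma> \<rho> \<tau> \<alpha> n * ufun \<sigma> \<rho> \<tau> \<alpha> (subl n (unitv i)) \<noteq> 0"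
  shows "(\<Sum>i\<in>{1,2,3}. \<Gamma> i *
            (ufun \<sigma> \<rho> \<tau> \<alpha> (addl n (unitv i))
               / (1 + ufun \<sigma> \<rho> \<tau> \<alpha> n * ufun \<sigma> \<rho> \<tau> \<alpha> (addl n (unitv i)))
           + ufun \<sigma> \<rho> \<tau> \<alpha> (subl n (unitv i))
               / (1 + ufun \<sigma> \<rho> \<tau> \<alpha> n * ufun \<sigma> \<rho> \<tau> \<alpha> (subl n (unitv i))))) = 0"
proof -
  let ?U = "ufun \<sigma> \<rho> \<tau> \<alpha>"
  have alg': "\<Gamma> 1 * ((S 0 - S 1)/(lam 0 - lam 1) + (S 2 - S 3)/(lam 2 - lam 3))
     + \<Gamma> 2 * ((S 0 - S 2)/(lam 0 - lam 2) + (S 3 - S 1)/(lam 3 - lam 1))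
     + \<Gamma> 3 * ((S 0 - S 3)/(lam 0 - lam 3) + (S 1 - S 2)/(lam 1 - lam 2)) = 0" for S
  proof -
    have sD: "(\<Sum>i\<in>{1,2,3}. \<Gamma> i * lam i) = \<Gamma> 1 * lam 1 + \<Gamma> 2 * lam 2 + \<Gamma> 3 * lam 3" by (simp add: algebra_simps)
    have sQ: "(\<Sum>i\<in>{1,2,3}. \<Gamma> i * (lam i)\<^sup>2) = \<Gamma> 1 * (lam 1)\<^sup>2 + \<Gamma> 2 * (lam 2)\<^sup>2 + \<Gamma> 3 * (lam 3)\<^sup>2" by (simp add: algebra_simps)
    have sL: "(\<Sum>i\<in>{1,2,3}. lam i) = lam 1 + lam 2 + lam 3" by (simp add: algebra_simps)
    show ?thesis
      by (rule alg[OF hG hdist hdist hdist hdist hdist hdist hGl[unfolded sD] hl0[unfolded sD sQ sL]]) auto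
  qed
  have sumE: "(\<Sum>i\<in>{1,2,3}. f i) = f 1 + f 2 + f (3::nat)" for f :: "nat \<Rightarrow> complex"
    by (simp add: algebra_simps)
  have c0: "lam l - lam m \<noteq> 0" if "l<4" "m<4" "l\<noteq>m" for l m using hdist[OF that] by simp
  show ?thesis
  proof (cases "parity_even n")
    case True
    define y where "y = xpos \<alpha> n - delta \<alpha>"
    have Un: "?U n = \<rho> y / \<tau> y" using True by (simp add: ufun_def y_def)
    have ty: "\<tau> y \<noteq> 0" using hden0 True by (simp add: upt_pt_def y_def)
    have TE: "\<sigma> P/\<tau> P / (1 + ?U n * (\<sigma> P/\<tau> P)) =
       (\<sigma>(y+\<alpha> l)/\<tau>(y+\<alpha> l) - \<sigma>(y+\<alpha> m)/\<tau>(y+\<alpha> m))/(lam l - lam m)"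
      if "l<4" "m<4" "l\<noteq>m" "P = y + \<alpha> l + \<alpha> m" "\<tau> P \<noteq> 0" "1 + ?U n * (\<sigma> P/\<tau> P) \<noteq> 0" for l m P
      unfolding Un that(4)
      by (rule termA[OF hab[OF that(1-3)] c0[OF that(1-3)] ty _ _ h1[OF that(1-3), of y] h3[OF that(1-3), of y]])
         (use that Un in auto)
    have pa: "upt_pt \<alpha> (addl n (unitv i)) = xpos \<alpha> n + evec \<alpha> i + delta \<alpha>"
      and ua: "?U (addl n (unitv i)) = \<sigma> (upt_pt \<alpha> (addl n (unitv i))) / \<tau> (upt_pt \<alpha> (addl n (unitv i)))"
      and ps: "upt_pt \<alpha> (subl n (unitv i)) = xpos \<alpha> n - evec \<alpha> i + delta \<alpha>"
      and us: "?U (subl n (unitv i)) = \<sigma> (upt_pt \<alpha> (subl n (unitv i))) / \<tau> (upt_pt \<alpha> (subl n (unitv i)))"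
      if "i \<in> {1,2,3}" for i
      using True that by (simp_all add: upt_pt_def par_add par_sub xp_add xp_sub ufun_upt del: insert_iff)
    have p1: "upt_pt \<alpha> (addl n (unitv 1)) = y + \<alpha> 0 + \<alpha> 1"
    proof -
      have "upt_pt \<alpha> (addl n (unitv 1)) = xpos \<alpha> n + evec \<alpha> 1 + delta \<alpha>" by (rule pa) simp
      also have "\<dots> = y + \<alpha> 0 + \<alpha> 1" unfolding y_def ev1 dl by (simp add: vec_eq_iff algebra_simps)
      finally show ?thesis .
    qed
    have p2: "upt_pt \<alpha> (addl n (unitv 2)) = y + \<alpha> 0 + \<alpha> 2"
    proof -
      have "upt_pt \<alpha> (addl n (unitv 2)) = xpos \<alpha> n + evec \<alpha> 2 + delta \<alpha>" by (rule pa) simp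
      also have "\<dots> = y + \<alpha> 0 + \<alpha> 2" unfolding y_def ev2 dl by (simp add: vec_eq_iff algebra_simps)
      finally show ?thesis .
    qed
    have p3: "upt_pt \<alpha> (addl n (unitv 3)) = y + \<alpha> 0 + \<alpha> 3"
    proof -
      have "upt_pt \<alpha> (addl n (unitv 3)) = xpos \<alpha> n + evec \<alpha> 3 + delta \<alpha>" by (rule pa) simp
      also have "\<dots> = y + \<alpha> 0 + \<alpha> 3" unfolding y_def ev3 dl by (simp add: vec_eq_iff algebra_simps)
      finally show ?thesis .
    qed
    have q1: "upt_pt \<alpha> (subl n (unitv 1)) = y + \<alpha> 2 + \<alpha> 3"
    proof -
      have "upt_pt \<alpha> (subl n (unitv 1)) = xpos \<alpha> n - evec \<alpha> 1 + delta \<alpha>" by (rule ps) simp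
      also have "\<dots> = y + \<alpha> 2 + \<alpha> 3" unfolding y_def ev1 dl by (simp add: vec_eq_iff algebra_simps)
      finally show ?thesis .
    qed
    have q2: "upt_pt \<alpha> (subl n (unitv 2)) = y + \<alpha> 3 + \<alpha> 1"
    proof -
      have "upt_pt \<alpha> (subl n (unitv 2)) = xpos \<alpha> n - evec \<alpha> 2 + delta \<alpha>" by (rule ps) simp
      also have "\<dots> = y + \<alpha> 3 + \<alpha> 1" unfolding y_def ev2 dl by (simp add: vec_eq_iff algebra_simps)
      finally show ?thesis .
    qed
    have q3: "upt_pt \<alpha> (subl n (unitv 3)) = y + \<alpha> 1 + \<alpha> 2"
    proof -
      have "upt_pt \<alpha> (subl n (unitv 3)) = xpos \<alpha> n - evec \<alpha> 3 + delta \<alpha>" by (rule ps) simp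
      also have "\<dots> = y + \<alpha> 1 + \<alpha> 2" unfolding y_def ev3 dl by (simp add: vec_eq_iff algebra_simps)
      finally show ?thesis .
    qed
    have TA: "?U (addl n (unitv i)) / (1 + ?U n * ?U (addl n (unitv i))) =
       (\<sigma>(y+\<alpha> l)/\<tau>(y+\<alpha> l) - \<sigma>(y+\<alpha> m)/\<tau>(y+\<alpha> m))/(lam l - lam m)"
      if "i\<in>{1,2,3}" "l<4" "m<4" "l\<noteq>m" "upt_pt \<alpha> (addl n (unitv i)) = y + \<alpha> l + \<alpha> m" for i l m
    proof -
      note e = ua[OF that(1)]
      show ?thesis unfolding e
        by (rule TE[OF that(2-5) hdenp[OF that(1)]]) (use hdenp'[OF that(1)] e in simp)
    qed
    have TB: "?U (subl n (unitv i)) / (1 + ?U n * ?U (subl n (unitv i))) =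
       (\<sigma>(y+\<alpha> l)/\<tau>(y+\<alpha> l) - \<sigma>(y+\<alpha> m)/\<tau>(y+\<alpha> m))/(lam l - lam m)"
      if "i\<in>{1,2,3}" "l<4" "m<4" "l\<noteq>m" "upt_pt \<alpha> (subl n (unitv i)) = y + \<alpha> l + \<alpha> m" for i l m
    proof -
      note e = us[OF that(1)]
      show ?thesis unfolding e
        by (rule TE[OF that(2-5) hdenm[OF that(1)]]) (use hdenm'[OF that(1)] e in simp)
    qed
    define S where "S l = \<sigma>(y+\<alpha> l)/\<tau>(y+\<alpha> l)" for l
    have t1: "?U (addl n (unitv 1)) / (1 + ?U n * ?U (addl n (unitv 1))) = (S 0 - S 1)/(lam 0 - lam 1)"
      unfolding S_def by (rule TA[OF _ _ _ _ p1]) auto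
    have t2: "?U (addl n (unitv 2)) / (1 + ?U n * ?U (addl n (unitv 2))) = (S 0 - S 2)/(lam 0 - lam 2)"
      unfolding S_def by (rule TA[OF _ _ _ _ p2]) auto
    have t3: "?U (addl n (unitv 3)) / (1 + ?U n * ?U (addl n (unitv 3))) = (S 0 - S 3)/(lam 0 - lam 3)"
      unfolding S_def by (rule TA[OF _ _ _ _ p3]) auto
    have t4: "?U (subl n (unitv 1)) / (1 + ?U n * ?U (subl n (unitv 1))) = (S 2 - S 3)/(lam 2 - lam 3)"
      unfolding S_def by (rule TB[OF _ _ _ _ q1]) auto
    have t5: "?U (subl n (unitv 2)) / (1 + ?U n * ?U (subl n (unitv 2))) = (S 3 - S 1)/(lam 3 - lam 1)"
      unfolding S_def by (rule TB[OF _ _ _ _ q2]) auto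
    have t6: "?U (subl n (unitv 3)) / (1 + ?U n * ?U (subl n (unitv 3))) = (S 1 - S 2)/(lam 1 - lam 2)"
      unfolding S_def by (rule TB[OF _ _ _ _ q3]) auto
    show ?thesis unfolding sumE t1 t2 t3 t4 t5 t6 by (rule alg')
  next
    case False
    define z where "z = xpos \<alpha> n + delta \<alpha>"
    have Un: "?U n = \<sigma> z / \<tau> z" using False by (simp add: ufun_def z_def)
    have tz: "\<tau> z \<noteq> 0" using hden0 False by (simp add: upt_pt_def z_def)
    have TO: "\<rho> P/\<tau> P / (1 + ?U n * (\<rho> P/\<tau> P)) =
       (\<rho>(z-\<alpha> l)/\<tau>(z-\<alpha> l) - \<rho>(z-\<alpha> m)/\<tau>(z-\<alpha> m))/(lam l - lam m)"
      if "l<4" "m<4" "l\<noteq>m" "P + \<alpha> l + \<alpha> m = z" "\<tau> P \<noteq> 0" "1 + ?U n * (\<rho> P/\<tau> P) \<noteq> 0" for l m P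
    proof -
      have e1: "P + \<alpha> l = z - \<alpha> m" and e2: "P + \<alpha> m = z - \<alpha> l"
        unfolding that(4)[symmetric] by (simp_all add: algebra_simps)
      note h2' = h2[OF that(1-3), of P, unfolded that(4), unfolded e1 e2]
      note h3' = h3[OF that(1-3), of P, unfolded that(4), unfolded e1 e2]
      show ?thesis unfolding Un
        by (rule termB[OF hab[OF that(1-3)] c0[OF that(1-3)] that(5) tz _ h2' h3'])
           (use that(6) Un in simp)
    qed
    have pa: "upt_pt \<alpha> (addl n (unitv i)) = xpos \<alpha> n + evec \<alpha> i - delta \<alpha>"
      and ua: "?U (addl n (unitv i)) = \<rho> (upt_pt \<alpha> (addl n (unitv i))) / \<tau> (upt_pt \<alpha> (addl n (unitv i)))"
      and ps: "upt_pt \<alpha> (subl n (unitv i)) = xpos \<alpha> n - evec \<alpha> i - delta \<alpha>"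
      and us: "?U (subl n (unitv i)) = \<rho> (upt_pt \<alpha> (subl n (unitv i))) / \<tau> (upt_pt \<alpha> (subl n (unitv i)))"
      if "i \<in> {1,2,3}" for i
      using False that by (simp_all add: upt_pt_def par_add par_sub xp_add xp_sub ufun_upt del: insert_iff)
    have p1: "upt_pt \<alpha> (addl n (unitv 1)) + \<alpha> 2 + \<alpha> 3 = z"
    proof -
      have e: "upt_pt \<alpha> (addl n (unitv 1)) = xpos \<alpha> n + evec \<alpha> 1 - delta \<alpha>" by (rule pa) simp
      show ?thesis unfolding e z_def ev1 dl by (simp add: vec_eq_iff algebra_simps)
    qed
    have p2: "upt_pt \<alpha> (addl n (unitv 2)) + \<alpha> 3 + \<alpha> 1 = z"
    proof -
      have e: "upt_pt \<alpha> (addl n (unitv 2)) = xpos \<alpha> n + evec \<alpha> 2 - delta \<alpha>" by (rule pa) simp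
      show ?thesis unfolding e z_def ev2 dl by (simp add: vec_eq_iff algebra_simps)
    qed
    have p3: "upt_pt \<alpha> (addl n (unitv 3)) + \<alpha> 1 + \<alpha> 2 = z"
    proof -
      have e: "upt_pt \<alpha> (addl n (unitv 3)) = xpos \<alpha> n + evec \<alpha> 3 - delta \<alpha>" by (rule pa) simp
      show ?thesis unfolding e z_def ev3 dl by (simp add: vec_eq_iff algebra_simps)
    qed
    have q1: "upt_pt \<alpha> (subl n (unitv 1)) + \<alpha> 0 + \<alpha> 1 = z"
    proof -
      have e: "upt_pt \<alpha> (subl n (unitv 1)) = xpos \<alpha> n - evec \<alpha> 1 - delta \<alpha>" by (rule ps) simp
      show ?thesis unfolding e z_def ev1 dl by (simp add: vec_eq_iff algebra_simps)
    qed
    have q2: "upt_pt \<alpha> (subl n (unitv 2)) + \<alpha> 0 + \<alpha> 2 = z"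
    proof -
      have e: "upt_pt \<alpha> (subl n (unitv 2)) = xpos \<alpha> n - evec \<alpha> 2 - delta \<alpha>" by (rule ps) simp
      show ?thesis unfolding e z_def ev2 dl by (simp add: vec_eq_iff algebra_simps)
    qed
    have q3: "upt_pt \<alpha> (subl n (unitv 3)) + \<alpha> 0 + \<alpha> 3 = z"
    proof -
      have e: "upt_pt \<alpha> (subl n (unitv 3)) = xpos \<alpha> n - evec \<alpha> 3 - delta \<alpha>" by (rule ps) simp
      show ?thesis unfolding e z_def ev3 dl by (simp add: vec_eq_iff algebra_simps)
    qed
    have TA: "?U (addl n (unitv i)) / (1 + ?U n * ?U (addl n (unitv i))) =
       (\<rho>(z-\<alpha> l)/\<tau>(z-\<alpha> l) - \<rho>(z-\<alpha> m)/\<tau>(z-\<alpha> m))/(lam l - lam m)"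
      if "i\<in>{1,2,3}" "l<4" "m<4" "l\<noteq>m" "upt_pt \<alpha> (addl n (unitv i)) + \<alpha> l + \<alpha> m = z" for i l m
    proof -
      note e = ua[OF that(1)]
      show ?thesis unfolding e
        by (rule TO[OF that(2-5) hdenp[OF that(1)]]) (use hdenp'[OF that(1)] e in simp)
    qed
    have TB: "?U (subl n (unitv i)) / (1 + ?U n * ?U (subl n (unitv i))) =
       (\<rho>(z-\<alpha> l)/\<tau>(z-\<alpha> l) - \<rho>(z-\<alpha> m)/\<tau>(z-\<alpha> m))/(lam l - lam m)"
      if "i\<in>{1,2,3}" "l<4" "m<4" "l\<noteq>m" "upt_pt \<alpha> (subl n (unitv i)) + \<alpha> l + \<alpha> m = z" for i l m
    proof -
      note e = us[OF that(1)]
      show ?thesis unfolding e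
        by (rule TO[OF that(2-5) hdenm[OF that(1)]]) (use hdenm'[OF that(1)] e in simp)
    qed
    define S where "S l = \<rho>(z-\<alpha> l)/\<tau>(z-\<alpha> l)" for l
    have t1: "?U (addl n (unitv 1)) / (1 + ?U n * ?U (addl n (unitv 1))) = (S 2 - S 3)/(lam 2 - lam 3)"
      unfolding S_def by (rule TA[OF _ _ _ _ p1]) auto
    have t2: "?U (addl n (unitv 2)) / (1 + ?U n * ?U (addl n (unitv 2))) = (S 3 - S 1)/(lam 3 - lam 1)"
      unfolding S_def by (rule TA[OF _ _ _ _ p2]) auto
    have t3: "?U (addl n (unitv 3)) / (1 + ?U n * ?U (addl n (unitv 3))) = (S 1 - S 2)/(lam 1 - lam 2)"
      unfolding S_def by (rule TA[OF _ _ _ _ p3]) auto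
    have t4: "?U (subl n (unitv 1)) / (1 + ?U n * ?U (subl n (unitv 1))) = (S 0 - S 1)/(lam 0 - lam 1)"
      unfolding S_def by (rule TB[OF _ _ _ _ q1]) auto
    have t5: "?U (subl n (unitv 2)) / (1 + ?U n * ?U (subl n (unitv 2))) = (S 0 - S 2)/(lam 0 - lam 2)"
      unfolding S_def by (rule TB[OF _ _ _ _ q2]) auto
    have t6: "?U (subl n (unitv 3)) / (1 + ?U n * ?U (subl n (unitv 3))) = (S 0 - S 3)/(lam 0 - lam 3)"
      unfolding S_def by (rule TB[OF _ _ _ _ q3]) auto
    show ?thesis unfolding sumE t1 t2 t3 t4 t5 t6 using alg'[of S] by (simp only: add.commute)
  qed
qed
end
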